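(* A regular semigroup is a generalized inverse semigroup if and only if it is isomorphic to a subsemigroup of a $\lambda$-semidirect product $K\rtimes_\lambda T$ of a rectangular band $K$ by an inverse semigroup $T$ (with respect to some action of $T$ on $K$).
   Context: A generalized inverse semigroup is an orthodox semigroup (regular semigroup whose idempotents form a subsemigroup) whose set of idempotents is a normal band ($efge=egfe$ for all idempotents $e,f,g$). A rectangular band is a semigroup satisfying $xx=x$ and $xyz=xz$. Let $K$ be a semigroup and $T$ an inverse semigroup; $T$ acts on $K$ if an antihomomorphism $t\mapsto\varepsilon_t$ from $T$ into the endomorphism monoid of $K$ is given (so $\varepsilon_u\varepsilon_t=\varepsilon_{tu}$); write ${}^t a$ for $a\varepsilon_t$. The $\lambda$-semidirect product $K\rtimes_\lambda T$ is the set $\{(a,t)\in K\times T: {}^{tt^{-1}}a=a\}$ with multiplication $(a,t)(b,u)=({}^{(tu)(tu)^{-1}}a\cdot {}^t b,\ tu)$. *)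

theory Defs
  imports Main
begin

definition sgrp :: "'a set \<Rightarrow> ('a \<Rightarrow> 'a \<Rightarrow> 'a) \<Rightarrow> bool" where
  "sgrp S m \<longleftrightarrow> (\<forall>x\<in>S. \<forall>y\<in>S. m x y \<in> S) \<and>
     (\<forall>x\<in>S. \<forall>y\<in>S. \<forall>z\<in>S. m (m x y) z = m x (m y z))"

definition regular_sgrp :: "'a set \<Rightarrow> ('a \<Rightarrow> 'a \<Rightarrow> 'a) \<Rightarrow> bool" where
  "regular_sgrp S m \<longleftrightarrow> sgrp S m \<and> (\<forall>a\<in>S. \<exists>x\<in>S. m (m a x) a = a)"

definition idems :: "'a set \<Rightarrow> ('a \<Rightarrow> 'a \<Rightarrow> 'a) \<Rightarrow> 'a set" where
  "idems S m = {e\<in>S. m e e = e}"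

definition orthodox :: "'a set \<Rightarrow> ('a \<Rightarrow> 'a \<Rightarrow> 'a) \<Rightarrow> bool" where
  "orthodox S m \<longleftrightarrow> regular_sgrp S m \<and> (\<forall>e\<in>idems S m. \<forall>f\<in>idems S m. m e f \<in> idems S m)"

definition generalized_inverse :: "'a set \<Rightarrow> ('a \<Rightarrow> 'a \<Rightarrow> 'a) \<Rightarrow> bool" where
  "generalized_inverse S m \<longleftrightarrow> orthodox S m \<and>
     (\<forall>e\<in>idems S m. \<forall>f\<in>idems S m. \<forall>g\<in>idems S m.
        m (m (m e f) g) e = m (m (m e g) f) e)"

definition rectangular_band :: "'a set \<Rightarrow> ('a \<Rightarrow> 'a \<Rightarrow> 'a) \<Rightarrow> bool" where
  "rectangular_band K m \<longleftrightarrow> sgrp K m \<and> (\<forall>x\<in>K. m x x = x) \<and>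
     (\<forall>x\<in>K. \<forall>y\<in>K. \<forall>z\<in>K. m (m x y) z = m x z)"

definition inverse_sgrp :: "'a set \<Rightarrow> ('a \<Rightarrow> 'a \<Rightarrow> 'a) \<Rightarrow> bool" where
  "inverse_sgrp T m \<longleftrightarrow> sgrp T m \<and>
     (\<forall>a\<in>T. \<exists>!x. x \<in> T \<and> m (m a x) a = a \<and> m (m x a) x = x)"

definition sinv :: "'a set \<Rightarrow> ('a \<Rightarrow> 'a \<Rightarrow> 'a) \<Rightarrow> 'a \<Rightarrow> 'a" where
  "sinv T m a = (THE x. x \<in> T \<and> m (m a x) a = a \<and> m (m x a) x = x)"

text \<open>An action of T on K: each act t is an endomorphism of K, and t \<mapsto> act t is an
  antihomomorphism into End(K) with right-action composition, i.e.
  \<open>\<epsilon>\<^sub>u\<epsilon>\<^sub>t = \<epsilon>\<^sub>t\<^sub>u\<close>, which in left notation reads act (t u) a = act t (act u a).\<close>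
definition sgrp_action :: "'k set \<Rightarrow> ('k \<Rightarrow> 'k \<Rightarrow> 'k) \<Rightarrow> 't set \<Rightarrow> ('t \<Rightarrow> 't \<Rightarrow> 't)
    \<Rightarrow> ('t \<Rightarrow> 'k \<Rightarrow> 'k) \<Rightarrow> bool" where
  "sgrp_action K km T tm act \<longleftrightarrow>
     (\<forall>t\<in>T. \<forall>a\<in>K. act t a \<in> K) \<and>
     (\<forall>t\<in>T. \<forall>a\<in>K. \<forall>b\<in>K. act t (km a b) = km (act t a) (act t b)) \<and>
     (\<forall>t\<in>T. \<forall>u\<in>T. \<forall>a\<in>K. act (tm t u) a = act t (act u a))"

definition lsd_carrier :: "'k set \<Rightarrow> 't set \<Rightarrow> ('t \<Rightarrow> 't \<Rightarrow> 't) \<Rightarrow> ('t \<Rightarrow> 'k \<Rightarrow> 'k)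
    \<Rightarrow> ('k \<times> 't) set" where
  "lsd_carrier K T tm act = {(a, t). a \<in> K \<and> t \<in> T \<and> act (tm t (sinv T tm t)) a = a}"

definition lsd_mult :: "('k \<Rightarrow> 'k \<Rightarrow> 'k) \<Rightarrow> 't set \<Rightarrow> ('t \<Rightarrow> 't \<Rightarrow> 't) \<Rightarrow> ('t \<Rightarrow> 'k \<Rightarrow> 'k)
    \<Rightarrow> 'k \<times> 't \<Rightarrow> 'k \<times> 't \<Rightarrow> 'k \<times> 't" where
  "lsd_mult km T tm act p q =
     (case p of (a, t) \<Rightarrow> case q of (b, u) \<Rightarrow>
        (km (act (tm (tm t u) (sinv T tm (tm t u))) a) (act t b), tm t u))"

definition embeds_in_lsd :: "'a set \<Rightarrow> ('a \<Rightarrow> 'a \<Rightarrow> 'a) \<Rightarrow> 'k set \<Rightarrow> ('k \<Rightarrow> 'k \<Rightarrow> 'k)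
    \<Rightarrow> 't set \<Rightarrow> ('t \<Rightarrow> 't \<Rightarrow> 't) \<Rightarrow> ('t \<Rightarrow> 'k \<Rightarrow> 'k) \<Rightarrow> bool" where
  "embeds_in_lsd S m K km T tm act \<longleftrightarrow>
     rectangular_band K km \<and> inverse_sgrp T tm \<and> sgrp_action K km T tm act \<and>
     (\<exists>\<phi>. inj_on \<phi> S \<and> \<phi> ` S \<subseteq> lsd_carrier K T tm act \<and>
          (\<forall>x\<in>S. \<forall>y\<in>S. \<phi> (m x y) = lsd_mult km T tm act (\<phi> x) (\<phi> y)))"

end

theory Submission
  imports Defs
begin

locale sgl =
  fixes T :: "'t set" and tm :: "'t \<Rightarrow> 't \<Rightarrow> 't" (infixl "\<star>" 70)
  assumes sg: "sgrp T tm"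
begin

lemma tcl[simp]: "x \<in> T \<Longrightarrow> y \<in> T \<Longrightarrow> x \<star> y \<in> T"
  using sg unfolding sgrp_def by blast

lemma tas: "x \<in> T \<Longrightarrow> y \<in> T \<Longrightarrow> z \<in> T \<Longrightarrow> x \<star> y \<star> z = x \<star> (y \<star> z)"
  using sg unfolding sgrp_def by blast

lemma unique_inv:
  assumes comm: "\<forall>e\<in>T. \<forall>f\<in>T. e \<star> e = e \<longrightarrow> f \<star> f = f \<longrightarrow> e \<star> f = f \<star> e"
    and a: "a \<in> T" and b: "b \<in> T" and c: "c \<in> T"
    and ab: "a \<star> b \<star> a = a" "b \<star> a \<star> b = b" and ac: "a \<star> c \<star> a = a" "c \<star> a \<star> c = c"
  shows "b = c"
proof -
  have ab': "a \<star> (b \<star> a) = a" "b \<star> (a \<star> b) = b" using ab a b by (simp_all add: tas)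
  have ac': "a \<star> (c \<star> a) = a" "c \<star> (a \<star> c) = c" using ac a c by (simp_all add: tas)
  have abc: "\<And>z. z \<in> T \<Longrightarrow> a \<star> (b \<star> (a \<star> z)) = a \<star> z"
    using ab a b by (simp add: tas[symmetric])
  have acc: "\<And>z. z \<in> T \<Longrightarrow> a \<star> (c \<star> (a \<star> z)) = a \<star> z"
    using ac a c by (simp add: tas[symmetric])
  have ba: "b \<star> a \<star> (b \<star> a) = b \<star> a" using ab' a b by (simp add: tas)
  have ca: "c \<star> a \<star> (c \<star> a) = c \<star> a" using ac' a c by (simp add: tas)
  have ab2: "a \<star> b \<star> (a \<star> b) = a \<star> b" using ab' a b by (simp add: tas[symmetric])
  have ac2: "a \<star> c \<star> (a \<star> c) = a \<star> c" using ac' a c by (simp add: tas[symmetric])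
  have c1: "b \<star> a \<star> (c \<star> a) = c \<star> a \<star> (b \<star> a)" using comm ba ca a b c by simp
  have c2: "a \<star> b \<star> (a \<star> c) = a \<star> c \<star> (a \<star> b)" using comm ab2 ac2 a b c by simp
  have "b = b \<star> a \<star> (c \<star> a) \<star> b" using ab' ac' a b c by (simp add: tas acc)
  also have "\<dots> = c \<star> a \<star> (b \<star> a) \<star> b" using c1 by simp
  also have "\<dots> = c \<star> a \<star> b" using ab' ac' a b c by (simp add: tas abc)
  finally have 1: "b = c \<star> a \<star> b" .
  have "c = c \<star> (a \<star> b) \<star> (a \<star> c)" using ab' ac' a b c by (simp add: tas abc)
  also have "\<dots> = c \<star> (a \<star> c) \<star> (a \<star> b)"
    using c2 a b c tas[of c "a \<star> b" "a \<star> c"] tas[of c "a \<star> c" "a \<star> b"] by simp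
  also have "\<dots> = c \<star> a \<star> b" using ab' ac' a b c by (simp add: tas acc)
  finally have 2: "c = c \<star> a \<star> b" .
  show ?thesis using 1 2 by simp
qed

end

lemma sinv_prop:
  assumes "inverse_sgrp T tm" "a \<in> T"
  shows "sinv T tm a \<in> T \<and> tm (tm a (sinv T tm a)) a = a \<and> tm (tm (sinv T tm a) a) (sinv T tm a) = sinv T tm a"
proof -
  have "\<exists>!x. x \<in> T \<and> tm (tm a x) a = a \<and> tm (tm x a) x = x" using assms unfolding inverse_sgrp_def by blast
  from theI'[OF this] show ?thesis unfolding sinv_def .
qed

lemma sinv_eq:
  assumes "inverse_sgrp T tm" "a \<in> T"
    and "x \<in> T \<and> tm (tm a x) a = a \<and> tm (tm x a) x = x"
  shows "sinv T tm a = x"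
proof -
  have "\<exists>!x. x \<in> T \<and> tm (tm a x) a = a \<and> tm (tm x a) x = x" using assms unfolding inverse_sgrp_def by blast
  from the1_equality[OF this assms(3)] show ?thesis unfolding sinv_def .
qed

locale invs = sgl +
  assumes inv: "inverse_sgrp T tm"
begin

lemma uniq: "a \<in> T \<Longrightarrow> x \<in> T \<Longrightarrow> y \<in> T \<Longrightarrow> a \<star> x \<star> a = a \<Longrightarrow> x \<star> a \<star> x = x
  \<Longrightarrow> a \<star> y \<star> a = a \<Longrightarrow> y \<star> a \<star> y = y \<Longrightarrow> x = y"
  using inv unfolding inverse_sgrp_def by blast

lemma tctx: "p \<in> T \<Longrightarrow> q \<in> T \<Longrightarrow> r \<in> T \<Longrightarrow> p \<star> q = r \<Longrightarrow> z \<in> T \<Longrightarrow> p \<star> (q \<star> z) = r \<star> z"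
  by (simp add: tas[symmetric])

lemma idem_prod:
  assumes e: "e \<in> T" "e \<star> e = e" and f: "f \<in> T" "f \<star> f = f"
  shows "e \<star> f \<star> (e \<star> f) = e \<star> f"
proof -
  define a where "a = e \<star> f"
  have aT: "a \<in> T" unfolding a_def using e f by simp
  obtain x where x: "x \<in> T" "a \<star> x \<star> a = a" "x \<star> a \<star> x = x" using inv aT unfolding inverse_sgrp_def by blast
  have ec: "\<And>z. z \<in> T \<Longrightarrow> e \<star> (e \<star> z) = e \<star> z" using tctx e by blast
  have fc: "\<And>z. z \<in> T \<Longrightarrow> f \<star> (f \<star> z) = f \<star> z" using tctx f by blast
  have x1: "e \<star> (f \<star> (x \<star> (e \<star> f))) = e \<star> f" using x(2) e f x(1) unfolding a_def by (simp add: tas)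
  have x1c: "\<And>z. z \<in> T \<Longrightarrow> e \<star> (f \<star> (x \<star> (e \<star> (f \<star> z)))) = e \<star> (f \<star> z)"
  proof -
    fix z assume z: "z \<in> T"
    have "e \<star> (f \<star> (x \<star> (e \<star> (f \<star> z)))) = (e \<star> (f \<star> (x \<star> (e \<star> f)))) \<star> z" using z e f x(1) by (simp add: tas)
    then show "e \<star> (f \<star> (x \<star> (e \<star> (f \<star> z)))) = e \<star> (f \<star> z)" using x1 z e f x(1) by (simp add: tas)
  qed
  have x2: "x \<star> (e \<star> (f \<star> x)) = x" using x(3) e f x(1) unfolding a_def by (simp add: tas)
  have x2c: "\<And>z. z \<in> T \<Longrightarrow> x \<star> (e \<star> (f \<star> (x \<star> z))) = x \<star> z"
  proof -
    fix z assume z: "z \<in> T"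
    have "x \<star> (e \<star> (f \<star> (x \<star> z))) = (x \<star> (e \<star> (f \<star> x))) \<star> z" using z e f x(1) by (simp add: tas)
    then show "x \<star> (e \<star> (f \<star> (x \<star> z))) = x \<star> z" using x2 z e f x(1) by (simp add: tas)
  qed
  have fxe: "x = f \<star> x \<star> e"
  proof (rule uniq[OF aT x(1)])
    show "a \<star> x \<star> a = a" "x \<star> a \<star> x = x" using x by auto
    show "f \<star> x \<star> e \<in> T" using e f x by simp
    show "a \<star> (f \<star> x \<star> e) \<star> a = a" unfolding a_def using e f x(1) x1 by (simp add: tas ec fc x1c)
    show "f \<star> x \<star> e \<star> a \<star> (f \<star> x \<star> e) = f \<star> x \<star> e" unfolding a_def using e f x(1) x2 by (simp add: tas ec fc x2c)
  qed
  have xx: "x \<star> x = x"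
  proof -
    have "x \<star> x = f \<star> x \<star> e \<star> (f \<star> x \<star> e)" using fxe by simp
    also have "\<dots> = f \<star> (x \<star> (e \<star> (f \<star> x))) \<star> e" using e f x(1) by (simp add: tas)
    also have "\<dots> = x" using x2 fxe by simp
    finally show ?thesis .
  qed
  have "a = x"
  proof (rule uniq[OF x(1) aT x(1)])
    show "x \<star> a \<star> x = x" "a \<star> x \<star> a = a" using x by auto
    show "x \<star> x \<star> x = x" "x \<star> x \<star> x = x" using xx by simp_all
  qed
  then show ?thesis using xx unfolding a_def by simp
qed

lemma idem_comm:
  assumes e: "e \<in> T" "e \<star> e = e" and f: "f \<in> T" "f \<star> f = f"
  shows "e \<star> f = f \<star> e"
proof -
  have ef: "e \<star> f \<star> (e \<star> f) = e \<star> f" using idem_prod e f by blast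
  have fe: "f \<star> e \<star> (f \<star> e) = f \<star> e" using idem_prod e f by blast
  have ec: "\<And>z. z \<in> T \<Longrightarrow> e \<star> (e \<star> z) = e \<star> z" using tctx e by blast
  have fc: "\<And>z. z \<in> T \<Longrightarrow> f \<star> (f \<star> z) = f \<star> z" using tctx f by blast
  have ef1: "e \<star> (f \<star> (e \<star> f)) = e \<star> f" using ef e f by (simp add: tas)
  have fe1: "f \<star> (e \<star> (f \<star> e)) = f \<star> e" using fe e f by (simp add: tas)
  have efc: "\<And>z. z \<in> T \<Longrightarrow> e \<star> (f \<star> (e \<star> (f \<star> z))) = e \<star> (f \<star> z)"
  proof -
    fix z assume z: "z \<in> T"
    have "e \<star> (f \<star> (e \<star> (f \<star> z))) = (e \<star> (f \<star> (e \<star> f))) \<star> z" using z e f by (simp add: tas)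
    then show "e \<star> (f \<star> (e \<star> (f \<star> z))) = e \<star> (f \<star> z)" using ef1 z e f by (simp add: tas)
  qed
  have fec: "\<And>z. z \<in> T \<Longrightarrow> f \<star> (e \<star> (f \<star> (e \<star> z))) = f \<star> (e \<star> z)"
  proof -
    fix z assume z: "z \<in> T"
    have "f \<star> (e \<star> (f \<star> (e \<star> z))) = (f \<star> (e \<star> (f \<star> e))) \<star> z" using z e f by (simp add: tas)
    then show "f \<star> (e \<star> (f \<star> (e \<star> z))) = f \<star> (e \<star> z)" using fe1 z e f by (simp add: tas)
  qed
  show ?thesis
  proof (rule uniq[of "e \<star> f"])
    show "e \<star> f \<in> T" "e \<star> f \<in> T" "f \<star> e \<in> T" using e f by auto
    show "e \<star> f \<star> (e \<star> f) \<star> (e \<star> f) = e \<star> f" using ef by simp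
    show "e \<star> f \<star> (e \<star> f) \<star> (e \<star> f) = e \<star> f" using ef by simp
    show "e \<star> f \<star> (f \<star> e) \<star> (e \<star> f) = e \<star> f" using e f ef1 by (simp add: tas fc ec efc)
    show "f \<star> e \<star> (e \<star> f) \<star> (f \<star> e) = f \<star> e" using e f fe1 by (simp add: tas fc ec fec)
  qed
qed

lemma ie1: "e \<in> T \<Longrightarrow> e \<star> e = e \<Longrightarrow> f \<in> T \<Longrightarrow> f \<star> f = f \<Longrightarrow> e \<star> f \<star> e = e \<star> f"
  using idem_comm[of e f] by (simp add: tas)
lemma ie2: "e \<in> T \<Longrightarrow> e \<star> e = e \<Longrightarrow> f \<in> T \<Longrightarrow> f \<star> f = f \<Longrightarrow> e \<star> f \<star> f = e \<star> f"
  by (simp add: tas)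

lemma sinv_idem: "e \<in> T \<Longrightarrow> e \<star> e = e \<Longrightarrow> sinv T tm e = e"
  by (rule sinv_eq[OF inv]) auto

end

lemma inv_from_comm:
  assumes sg: "sgrp T tm"
    and reg: "\<forall>a\<in>T. \<exists>x\<in>T. tm (tm a x) a = a \<and> tm (tm x a) x = x"
    and comm: "\<forall>e\<in>T. \<forall>f\<in>T. tm e e = e \<longrightarrow> tm f f = f \<longrightarrow> tm e f = tm f e"
  shows "inverse_sgrp T tm"
  unfolding inverse_sgrp_def
proof (intro conjI ballI)
  show "sgrp T tm" by (rule sg)
  fix a assume a: "a \<in> T"
  then obtain x where x: "x \<in> T" "tm (tm a x) a = a \<and> tm (tm x a) x = x" using reg by blast
  show "\<exists>!x. x \<in> T \<and> tm (tm a x) a = a \<and> tm (tm x a) x = x"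
  proof (rule ex1I[of _ x])
    show "x \<in> T \<and> tm (tm a x) a = a \<and> tm (tm x a) x = x" using x by blast
    fix y assume "y \<in> T \<and> tm (tm a y) a = a \<and> tm (tm y a) y = y"
    then show "y = x" using sgl.unique_inv[OF sgl.intro[OF sg] comm a] x by blast
  qed
qed

locale gisg =
  fixes S :: "'a set" and m :: "'a \<Rightarrow> 'a \<Rightarrow> 'a" (infixl "\<cdot>" 70)
  assumes gi: "generalized_inverse S m"
begin

lemma cl[simp]: "x \<in> S \<Longrightarrow> y \<in> S \<Longrightarrow> x \<cdot> y \<in> S"
  using gi unfolding generalized_inverse_def orthodox_def regular_sgrp_def sgrp_def by blast

lemma as: "x \<in> S \<Longrightarrow> y \<in> S \<Longrightarrow> z \<in> S \<Longrightarrow> x \<cdot> y \<cdot> z = x \<cdot> (y \<cdot> z)"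
  using gi unfolding generalized_inverse_def orthodox_def regular_sgrp_def sgrp_def by blast

lemma reg: "x \<in> S \<Longrightarrow> \<exists>y\<in>S. x \<cdot> y \<cdot> x = x"
  using gi unfolding generalized_inverse_def orthodox_def regular_sgrp_def by blast

lemma Ecl: "e \<in> S \<Longrightarrow> e \<cdot> e = e \<Longrightarrow> f \<in> S \<Longrightarrow> f \<cdot> f = f \<Longrightarrow> e \<cdot> f \<cdot> (e \<cdot> f) = e \<cdot> f"
  using gi unfolding generalized_inverse_def orthodox_def idems_def by blast

lemma nrm: "e \<in> S \<Longrightarrow> e \<cdot> e = e \<Longrightarrow> f \<in> S \<Longrightarrow> f \<cdot> f = f \<Longrightarrow> g \<in> S \<Longrightarrow> g \<cdot> g = g
   \<Longrightarrow> e \<cdot> f \<cdot> g \<cdot> e = e \<cdot> g \<cdot> f \<cdot> e"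
  using gi unfolding generalized_inverse_def idems_def by blast

definition V :: "'a \<Rightarrow> 'a set" where
  "V x = {y \<in> S. x \<cdot> y \<cdot> x = x \<and> y \<cdot> x \<cdot> y = y}"

lemma V_ne: "x \<in> S \<Longrightarrow> \<exists>y. y \<in> V x"
proof -
  assume x: "x \<in> S"
  then obtain y where y: "y \<in> S" "x \<cdot> y \<cdot> x = x" using reg by blast
  have "y \<cdot> x \<cdot> y \<in> V x" unfolding V_def using x y
    by (simp add: as) (metis as cl)
  then show ?thesis by blast
qed


lemma VD: "y \<in> V x \<Longrightarrow> y \<in> S \<and> x \<cdot> y \<cdot> x = x \<and> y \<cdot> x \<cdot> y = y"
  unfolding V_def by blast

lemma VS: "y \<in> V x \<Longrightarrow> y \<in> S" unfolding V_def by blast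

lemma Vr1: "x \<in> S \<Longrightarrow> y \<in> V x \<Longrightarrow> x \<cdot> (y \<cdot> x) = x"
  unfolding V_def by (auto simp: as)
lemma Vr1c: "x \<in> S \<Longrightarrow> y \<in> V x \<Longrightarrow> z \<in> S \<Longrightarrow> x \<cdot> (y \<cdot> (x \<cdot> z)) = x \<cdot> z"
  unfolding V_def by (auto simp: as[symmetric])
lemma Vr2: "x \<in> S \<Longrightarrow> y \<in> V x \<Longrightarrow> y \<cdot> (x \<cdot> y) = y"
  unfolding V_def by (auto simp: as)
lemma Vr2c: "x \<in> S \<Longrightarrow> y \<in> V x \<Longrightarrow> z \<in> S \<Longrightarrow> y \<cdot> (x \<cdot> (y \<cdot> z)) = y \<cdot> z"
  unfolding V_def by (auto simp: as[symmetric])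
lemma Vsym: "x \<in> S \<Longrightarrow> y \<in> V x \<Longrightarrow> x \<in> V y"
  unfolding V_def by auto

lemmas VV = Vr1 Vr1c Vr2 Vr2c VS

lemma idc: "e \<in> S \<Longrightarrow> e \<cdot> e = e \<Longrightarrow> z \<in> S \<Longrightarrow> e \<cdot> (e \<cdot> z) = e \<cdot> z"
  by (simp add: as[symmetric])

lemma klc:
  assumes a: "a \<in> S" and b: "b \<in> S" and x: "x \<in> V a" "x \<in> V b" and d: "d \<in> V a"
  shows "b \<cdot> d \<cdot> b = b"
proof -
  have xS: "x \<in> S" and dS: "d \<in> S" using x d VS by auto
  note ss = a b xS dS x d
  have i1: "d \<cdot> a \<cdot> (x \<cdot> b) \<cdot> (d \<cdot> a \<cdot> (x \<cdot> b)) = d \<cdot> a \<cdot> (x \<cdot> b)"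
    by (rule Ecl) (use ss in \<open>simp_all add: as VV\<close>)
  have i2: "b \<cdot> x \<cdot> (a \<cdot> d) \<cdot> (b \<cdot> x \<cdot> (a \<cdot> d)) = b \<cdot> x \<cdot> (a \<cdot> d)"
    by (rule Ecl) (use ss in \<open>simp_all add: as VV\<close>)
  have s3: "x \<cdot> b \<cdot> (d \<cdot> a) \<cdot> (x \<cdot> b) = x \<cdot> b"
  proof -
    have "x \<cdot> b \<cdot> (d \<cdot> a) \<cdot> (x \<cdot> b) = x \<cdot> a \<cdot> (d \<cdot> a \<cdot> (x \<cdot> b) \<cdot> (d \<cdot> a \<cdot> (x \<cdot> b)))"
      using ss by (simp add: as VV)
    also have "\<dots> = x \<cdot> a \<cdot> (d \<cdot> a \<cdot> (x \<cdot> b))" using i1 by simp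
    also have "\<dots> = x \<cdot> b" using ss by (simp add: as VV)
    finally show ?thesis .
  qed
  have s4: "b \<cdot> x \<cdot> (a \<cdot> d) \<cdot> (b \<cdot> x) = b \<cdot> x"
  proof -
    have "b \<cdot> x \<cdot> (a \<cdot> d) \<cdot> (b \<cdot> x) = (b \<cdot> x \<cdot> (a \<cdot> d) \<cdot> (b \<cdot> x \<cdot> (a \<cdot> d))) \<cdot> (a \<cdot> x)"
      using ss by (simp add: as VV)
    also have "\<dots> = b \<cdot> x \<cdot> (a \<cdot> d) \<cdot> (a \<cdot> x)" using i2 by simp
    also have "\<dots> = b \<cdot> x" using ss by (simp add: as VV)
    finally show ?thesis .
  qed
  have s5: "x \<cdot> b \<cdot> d \<cdot> b \<cdot> x = x"
  proof -
    have "x \<cdot> b \<cdot> d \<cdot> b \<cdot> x = (x \<cdot> b \<cdot> (d \<cdot> a) \<cdot> (x \<cdot> b)) \<cdot> x \<cdot> (b \<cdot> x \<cdot> (a \<cdot> d) \<cdot> (b \<cdot> x))"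
      using ss by (simp add: as VV)
    also have "\<dots> = x" using s3 s4 ss by (simp add: as VV)
    finally show ?thesis .
  qed
  have "b \<cdot> d \<cdot> b = b \<cdot> (x \<cdot> b \<cdot> d \<cdot> b \<cdot> x) \<cdot> b"
    using ss by (simp add: as VV)
  also have "\<dots> = b" using s5 ss by (simp add: as VV)
  finally show ?thesis .
qed


lemma kl_sub: "a \<in> S \<Longrightarrow> b \<in> S \<Longrightarrow> x \<in> V a \<Longrightarrow> x \<in> V b \<Longrightarrow> V a \<subseteq> V b"
proof
  fix d assume a: "a \<in> S" and b: "b \<in> S" and x: "x \<in> V a" "x \<in> V b" and d: "d \<in> V a"
  have xS: "x \<in> S" and dS: "d \<in> S" using x d VS by auto
  have 1: "b \<cdot> d \<cdot> b = b" using klc a b x d by blast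
  have 2: "d \<cdot> b \<cdot> d = d" using klc[of x d a b] xS dS Vsym a x d b by blast
  show "d \<in> V b" using 1 2 dS unfolding V_def by blast
qed

lemma kl: "a \<in> S \<Longrightarrow> b \<in> S \<Longrightarrow> x \<in> V a \<Longrightarrow> x \<in> V b \<Longrightarrow> V a = V b"
  using kl_sub by blast

lemma prodinv:
  assumes x: "x \<in> S" and y: "y \<in> S" and x': "x' \<in> V x" and y': "y' \<in> V y"
  shows "y' \<cdot> x' \<in> V (x \<cdot> y)"
proof -
  have xs: "x' \<in> S" "y' \<in> S" using x' y' VS by auto
  note ss = x y x' y' xs
  have i1: "x' \<cdot> x \<cdot> (y \<cdot> y') \<cdot> (x' \<cdot> x \<cdot> (y \<cdot> y')) = x' \<cdot> x \<cdot> (y \<cdot> y')"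
    by (rule Ecl) (use ss in \<open>simp_all add: as VV\<close>)
  have i2: "y \<cdot> y' \<cdot> (x' \<cdot> x) \<cdot> (y \<cdot> y' \<cdot> (x' \<cdot> x)) = y \<cdot> y' \<cdot> (x' \<cdot> x)"
    by (rule Ecl) (use ss in \<open>simp_all add: as VV\<close>)
  have 1: "x \<cdot> y \<cdot> (y' \<cdot> x') \<cdot> (x \<cdot> y) = x \<cdot> y"
  proof -
    have "x \<cdot> y \<cdot> (y' \<cdot> x') \<cdot> (x \<cdot> y) = x \<cdot> (x' \<cdot> x \<cdot> (y \<cdot> y') \<cdot> (x' \<cdot> x \<cdot> (y \<cdot> y'))) \<cdot> y"
      using ss by (simp add: as VV)
    also have "\<dots> = x \<cdot> y" using i1 ss by (simp add: as VV)
    finally show ?thesis .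
  qed
  have 2: "y' \<cdot> x' \<cdot> (x \<cdot> y) \<cdot> (y' \<cdot> x') = y' \<cdot> x'"
  proof -
    have "y' \<cdot> x' \<cdot> (x \<cdot> y) \<cdot> (y' \<cdot> x') = y' \<cdot> (y \<cdot> y' \<cdot> (x' \<cdot> x) \<cdot> (y \<cdot> y' \<cdot> (x' \<cdot> x))) \<cdot> x'"
      using ss by (simp add: as VV)
    also have "\<dots> = y' \<cdot> x'" using i2 ss by (simp add: as VV)
    finally show ?thesis .
  qed
  show ?thesis using 1 2 ss unfolding V_def by simp
qed

lemma compat:
  assumes "a \<in> S" "a2 \<in> S" "b \<in> S" "b2 \<in> S" "V a = V a2" "V b = V b2"
  shows "V (a \<cdot> b) = V (a2 \<cdot> b2)"
proof -
  obtain a' where a': "a' \<in> V a" using V_ne assms by blast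
  obtain b' where b': "b' \<in> V b" using V_ne assms by blast
  have "b' \<cdot> a' \<in> V (a \<cdot> b)" using prodinv a' b' assms by blast
  moreover have "b' \<cdot> a' \<in> V (a2 \<cdot> b2)" using prodinv a' b' assms by simp
  ultimately show ?thesis using kl assms by simp
qed

lemma idem_of_V:
  assumes u: "u \<in> S" and h: "V u = V (u \<cdot> u)"
  shows "u \<cdot> u = u"
proof -
  obtain w where w: "w \<in> V u" using V_ne u by blast
  have wS: "w \<in> S" using w VS by auto
  have w2: "w \<in> V (u \<cdot> u)" using w h by simp
  have "w \<cdot> (u \<cdot> u) \<cdot> w = w" using w2 unfolding V_def by blast
  hence ww: "w \<cdot> u \<cdot> (u \<cdot> w) = w" using u wS by (simp add: as)
  have "w \<cdot> u \<cdot> (u \<cdot> w) \<cdot> (w \<cdot> u \<cdot> (u \<cdot> w)) = w \<cdot> u \<cdot> (u \<cdot> w)"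
    by (rule Ecl) (use u w wS in \<open>simp_all add: as VV\<close>)
  hence wid: "w \<cdot> w = w" using ww by simp
  have "u \<cdot> w \<cdot> (w \<cdot> u) \<cdot> (u \<cdot> w \<cdot> (w \<cdot> u)) = u \<cdot> w \<cdot> (w \<cdot> u)"
    by (rule Ecl) (use u w wS in \<open>simp_all add: as VV\<close>)
  moreover have "u \<cdot> w \<cdot> (w \<cdot> u) = u" using u wS w wid by (simp add: as idc VV)
  ultimately show ?thesis by simp
qed


lemma nrmc: "e \<in> S \<Longrightarrow> e \<cdot> e = e \<Longrightarrow> f \<in> S \<Longrightarrow> f \<cdot> f = f \<Longrightarrow> g \<in> S \<Longrightarrow> g \<cdot> g = g
   \<Longrightarrow> e \<cdot> (f \<cdot> (g \<cdot> e)) = e \<cdot> (g \<cdot> (f \<cdot> e))"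
  using nrm by (simp add: as)

lemma nrmcc: "e \<in> S \<Longrightarrow> e \<cdot> e = e \<Longrightarrow> f \<in> S \<Longrightarrow> f \<cdot> f = f \<Longrightarrow> g \<in> S \<Longrightarrow> g \<cdot> g = g
   \<Longrightarrow> z \<in> S \<Longrightarrow> e \<cdot> (f \<cdot> (g \<cdot> (e \<cdot> z))) = e \<cdot> (g \<cdot> (f \<cdot> (e \<cdot> z)))"
  using nrm[of e f g] by (simp add: as[symmetric])

lemma ctx: "p \<in> S \<Longrightarrow> q \<in> S \<Longrightarrow> r \<in> S \<Longrightarrow> p \<cdot> q = r \<Longrightarrow> z \<in> S \<Longrightarrow> p \<cdot> (q \<cdot> z) = r \<cdot> z"
  by (simp add: as[symmetric])

lemma NR:
  assumes p: "p \<in> S" "p \<cdot> p = p" and q: "q \<in> S" "q \<cdot> q = q" and pq: "p \<cdot> q = q" "q \<cdot> p = p"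
    and u: "u \<in> S"
  shows "p \<cdot> u = q \<cdot> u"
proof -
  obtain u' where u': "u' \<in> V u" using V_ne u by blast
  have u'S: "u' \<in> S" using u' VS by auto
  define g where "g = u \<cdot> u'"
  have g: "g \<in> S" "g \<cdot> g = g" unfolding g_def using u u' u'S by (simp_all add: as VV)
  have c1: "\<And>z. z \<in> S \<Longrightarrow> p \<cdot> (q \<cdot> z) = q \<cdot> z" using ctx p q pq by blast
  have c2: "\<And>z. z \<in> S \<Longrightarrow> q \<cdot> (p \<cdot> z) = p \<cdot> z" using ctx p q pq by blast
  have c3: "\<And>z. z \<in> S \<Longrightarrow> g \<cdot> (g \<cdot> z) = g \<cdot> z" using ctx g by blast
  have pg: "p \<cdot> g \<cdot> (p \<cdot> g) = p \<cdot> g" using Ecl p g by blast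
  have qg: "q \<cdot> g \<cdot> (q \<cdot> g) = q \<cdot> g" using Ecl q g by blast
  have A: "p \<cdot> (g \<cdot> (q \<cdot> g)) = p \<cdot> g"
  proof -
    have "p \<cdot> (g \<cdot> (q \<cdot> g)) = p \<cdot> (g \<cdot> (p \<cdot> (q \<cdot> g)))" using c1 g q by simp
    also have "\<dots> = p \<cdot> (g \<cdot> (q \<cdot> (p \<cdot> g)))" using nrmc[of g p q] g p q by simp
    also have "\<dots> = p \<cdot> (g \<cdot> (p \<cdot> g))" using c2 g p by simp
    also have "\<dots> = p \<cdot> g" using pg p g by (simp add: as)
    finally show ?thesis .
  qed
  have "q \<cdot> g = p \<cdot> (q \<cdot> g)" using c1 g by simp
  also have "\<dots> = p \<cdot> (q \<cdot> g) \<cdot> (p \<cdot> (q \<cdot> g))" using c1 g qg by simp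
  also have "\<dots> = p \<cdot> (q \<cdot> (g \<cdot> (p \<cdot> (q \<cdot> g))))" using p q g by (simp add: as c1)
  also have "\<dots> = p \<cdot> (q \<cdot> (g \<cdot> (p \<cdot> q))) \<cdot> g" using p q g by (simp add: as)
  also have "\<dots> = p \<cdot> (q \<cdot> (p \<cdot> (g \<cdot> q))) \<cdot> g" using nrmc[of q g p] g p q by simp
  also have "\<dots> = p \<cdot> (g \<cdot> (q \<cdot> g))" using p q g by (simp add: as c2 c1 idc)
  also have "\<dots> = p \<cdot> g" by (rule A)
  finally have gg: "q \<cdot> g = p \<cdot> g" .
  have "p \<cdot> u = p \<cdot> g \<cdot> u" unfolding g_def using p u u' u'S by (simp add: as VV)
  also have "\<dots> = q \<cdot> g \<cdot> u" using gg by simp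
  also have "\<dots> = q \<cdot> u" unfolding g_def using q u u' u'S by (simp add: as VV)
  finally show ?thesis .
qed

lemma NL:
  assumes p: "p \<in> S" "p \<cdot> p = p" and q: "q \<in> S" "q \<cdot> q = q" and pq: "p \<cdot> q = p" "q \<cdot> p = q"
    and u: "u \<in> S"
  shows "u \<cdot> p = u \<cdot> q"
proof -
  obtain u' where u': "u' \<in> V u" using V_ne u by blast
  have u'S: "u' \<in> S" using u' VS by auto
  define g where "g = u' \<cdot> u"
  have g: "g \<in> S" "g \<cdot> g = g" unfolding g_def using u u' u'S by (simp_all add: as VV)
  have c1: "\<And>z. z \<in> S \<Longrightarrow> p \<cdot> (q \<cdot> z) = p \<cdot> z" using ctx p q pq by blast
  have c2: "\<And>z. z \<in> S \<Longrightarrow> q \<cdot> (p \<cdot> z) = q \<cdot> z" using ctx p q pq by blast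
  have c3: "\<And>z. z \<in> S \<Longrightarrow> g \<cdot> (g \<cdot> z) = g \<cdot> z" using ctx g by blast
  have gp: "g \<cdot> p \<cdot> (g \<cdot> p) = g \<cdot> p" using Ecl p g by blast
  have gq: "g \<cdot> q \<cdot> (g \<cdot> q) = g \<cdot> q" using Ecl q g by blast
  have A: "g \<cdot> (q \<cdot> (g \<cdot> p)) = g \<cdot> p"
  proof -
    have "g \<cdot> (q \<cdot> (g \<cdot> p)) = g \<cdot> (q \<cdot> (p \<cdot> (g \<cdot> p)))" using c2 g p by (simp add: as)
    also have "\<dots> = g \<cdot> (p \<cdot> (q \<cdot> (g \<cdot> p)))" using nrmcc[of g q p] g p q by (simp add: as)
    also have "\<dots> = g \<cdot> (p \<cdot> (g \<cdot> p))" using c1 g p by (simp add: as)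
    also have "\<dots> = g \<cdot> p" using gp p g by (simp add: as)
    finally show ?thesis .
  qed
  have "g \<cdot> q = g \<cdot> q \<cdot> p" using pq q p g by (simp add: as)
  also have "\<dots> = g \<cdot> q \<cdot> p \<cdot> (g \<cdot> q \<cdot> p)" using pq q p g gq by (simp add: as)
  also have "\<dots> = g \<cdot> (q \<cdot> (p \<cdot> (g \<cdot> q))) \<cdot> p" using p q g by (simp add: as)
  also have "\<dots> = g \<cdot> (q \<cdot> (g \<cdot> (p \<cdot> q))) \<cdot> p" using nrmcc[of q p g] g p q by (simp add: as)
  also have "\<dots> = g \<cdot> (q \<cdot> (g \<cdot> p))" using p q g pq by (simp add: as c1)
  also have "\<dots> = g \<cdot> p" by (rule A)
  finally have gg: "g \<cdot> q = g \<cdot> p" .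
  have "u \<cdot> p = u \<cdot> (g \<cdot> p)" unfolding g_def using p u u' u'S by (simp add: as VV)
  also have "\<dots> = u \<cdot> (g \<cdot> q)" using gg by simp
  also have "\<dots> = u \<cdot> q" unfolding g_def using q u u' u'S by (simp add: as VV)
  finally show ?thesis .
qed

lemma W2:
  assumes c: "c \<in> S" and s1: "s1 \<in> V c" and s2: "s2 \<in> V c" and z: "z \<in> S" and u: "u \<in> S"
  shows "z \<cdot> s1 \<cdot> u = z \<cdot> s2 \<cdot> u"
proof -
  have sS: "s1 \<in> S" "s2 \<in> S" using s1 s2 VS by auto
  note ss = c s1 s2 sS z u
  have L: "z \<cdot> (s2 \<cdot> c) = z \<cdot> (s1 \<cdot> c)"
    by (rule NL) (use ss in \<open>simp_all add: as VV\<close>)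
  have R: "c \<cdot> s2 \<cdot> u = c \<cdot> s1 \<cdot> u"
    by (rule NR) (use ss in \<open>simp_all add: as VV\<close>)
  have "z \<cdot> s2 \<cdot> u = z \<cdot> (s2 \<cdot> c) \<cdot> s1 \<cdot> (c \<cdot> s2 \<cdot> u)" using ss by (simp add: as VV)
  also have "\<dots> = z \<cdot> (s1 \<cdot> c) \<cdot> s1 \<cdot> (c \<cdot> s1 \<cdot> u)" using L R by simp
  also have "\<dots> = z \<cdot> s1 \<cdot> u" using ss by (simp add: as VV)
  finally show ?thesis by simp
qed

lemma Videm_comm:
  assumes e: "e \<in> S" "e \<cdot> e = e" and f: "f \<in> S" "f \<cdot> f = f"
  shows "V (e \<cdot> f) = V (f \<cdot> e)"
proof -
  have i1: "e \<cdot> f \<cdot> (e \<cdot> f) = e \<cdot> f" using Ecl e f by blast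
  have i2: "f \<cdot> e \<cdot> (f \<cdot> e) = f \<cdot> e" using Ecl e f by blast
  have ce: "\<And>z. z \<in> S \<Longrightarrow> e \<cdot> (e \<cdot> z) = e \<cdot> z" using idc e by blast
  have cf: "\<And>z. z \<in> S \<Longrightarrow> f \<cdot> (f \<cdot> z) = f \<cdot> z" using idc f by blast
  have c1: "\<And>z. z \<in> S \<Longrightarrow> e \<cdot> (f \<cdot> (e \<cdot> (f \<cdot> z))) = e \<cdot> (f \<cdot> z)"
    using ctx[OF _ _ _ i1] e f by (simp add: as)
  have c2: "\<And>z. z \<in> S \<Longrightarrow> f \<cdot> (e \<cdot> (f \<cdot> (e \<cdot> z))) = f \<cdot> (e \<cdot> z)"
    using ctx[OF _ _ _ i2] e f by (simp add: as)
  have "e \<cdot> f \<in> V (e \<cdot> f)" unfolding V_def using e f i1 by (simp add: as c1)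
  moreover have "e \<cdot> f \<in> V (f \<cdot> e)" unfolding V_def using e f i1 i2
    by (simp add: as c1 c2 ce cf)
  ultimately show ?thesis using kl e f by simp
qed


lemma idemV: "e \<in> S \<Longrightarrow> e \<cdot> e = e \<Longrightarrow> e \<in> V e"
  unfolding V_def by simp

definition rp :: "'a set \<Rightarrow> 'a" where "rp P = (SOME t. t \<in> S \<and> V t = P)"
definition TT :: "'a set set" where "TT = V ` S"
definition tmT :: "'a set \<Rightarrow> 'a set \<Rightarrow> 'a set" where "tmT P Q = V (rp P \<cdot> rp Q)"

lemma rp: "x \<in> S \<Longrightarrow> rp (V x) \<in> S \<and> V (rp (V x)) = V x"
  unfolding rp_def by (rule someI[of _ x]) simp

lemma tmT: "x \<in> S \<Longrightarrow> y \<in> S \<Longrightarrow> tmT (V x) (V y) = V (x \<cdot> y)"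
  unfolding tmT_def using compat[of "rp (V x)" x "rp (V y)" y] rp[of x] rp[of y] by simp

lemma TT_sgrp: "sgrp TT tmT"
  unfolding sgrp_def TT_def
  by (auto simp: tmT as)

lemma TT_inv: "inverse_sgrp TT tmT"
proof (rule inv_from_comm)
  show "sgrp TT tmT" by (rule TT_sgrp)
  show "\<forall>a\<in>TT. \<exists>x\<in>TT. tmT (tmT a x) a = a \<and> tmT (tmT x a) x = x"
  proof
    fix P assume "P \<in> TT"
    then obtain x where x: "x \<in> S" "P = V x" unfolding TT_def by blast
    obtain x' where x': "x' \<in> V x" using V_ne x by blast
    have x'S: "x' \<in> S" using x' VS by auto
    have "tmT (tmT P (V x')) P = P \<and> tmT (tmT (V x') P) (V x') = V x'"
      using x x' x'S by (simp add: tmT VD)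
    moreover have "V x' \<in> TT" using x'S unfolding TT_def by blast
    ultimately show "\<exists>Q\<in>TT. tmT (tmT P Q) P = P \<and> tmT (tmT Q P) Q = Q" by blast
  qed
  show "\<forall>e\<in>TT. \<forall>f\<in>TT. tmT e e = e \<longrightarrow> tmT f f = f \<longrightarrow> tmT e f = tmT f e"
  proof (intro ballI impI)
    fix P Q assume "P \<in> TT" "Q \<in> TT" and hP: "tmT P P = P" and hQ: "tmT Q Q = Q"
    then obtain u v where u: "u \<in> S" "P = V u" and v: "v \<in> S" "Q = V v" unfolding TT_def by blast
    have "u \<cdot> u = u" using idem_of_V u hP by (simp add: tmT)
    moreover have "v \<cdot> v = v" using idem_of_V v hQ by (simp add: tmT)
    ultimately show "tmT P Q = tmT Q P" using u v Videm_comm by (simp add: tmT)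
  qed
qed

lemma sinvT: "x \<in> S \<Longrightarrow> x' \<in> V x \<Longrightarrow> sinv TT tmT (V x) = V x'"
proof -
  assume x: "x \<in> S" and x': "x' \<in> V x"
  have x'S: "x' \<in> S" using x' VS by auto
  have "V x' \<in> TT \<and> tmT (tmT (V x) (V x')) (V x) = V x \<and> tmT (tmT (V x') (V x)) (V x') = V x'"
    using x x' x'S by (simp add: tmT VD TT_def)
  moreover have "V x \<in> TT" using x TT_def by blast
  ultimately show ?thesis using sinv_eq[OF TT_inv] by blast
qed


definition cR :: "'a \<Rightarrow> 'a set" where "cR z = {w \<in> S. \<forall>u\<in>S. w \<cdot> u = z \<cdot> u}"
definition cL :: "'a \<Rightarrow> 'a set" where "cL z = {w \<in> S. \<forall>u\<in>S. u \<cdot> w = u \<cdot> z}"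
definition rep :: "'a set \<Rightarrow> 'a" where "rep A = (SOME z. z \<in> A)"
definition rinv :: "'a set \<Rightarrow> 'a" where "rinv P = (SOME z. z \<in> P)"
definition alpha :: "'a set \<Rightarrow> 'a set \<Rightarrow> 'a set" where "alpha P A = cR (rep A \<cdot> rinv P)"
definition beta :: "'a set \<Rightarrow> 'a set \<Rightarrow> 'a set" where "beta P B = cL (rp P \<cdot> rep B)"
definition KK :: "('a set \<times> 'a set) set" where "KK = cR ` S \<times> cL ` S"
definition kmK :: "'a set \<times> 'a set \<Rightarrow> 'a set \<times> 'a set \<Rightarrow> 'a set \<times> 'a set" where
  "kmK p q = (fst p, snd q)"
definition actK :: "'a set \<Rightarrow> 'a set \<times> 'a set \<Rightarrow> 'a set \<times> 'a set" where
  "actK P k = (alpha P (fst k), beta P (snd k))"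
definition phi :: "'a \<Rightarrow> ('a set \<times> 'a set) \<times> 'a set" where
  "phi x = ((cR (x \<cdot> rinv (V x)), cL x), V x)"

lemma rinv: "x \<in> S \<Longrightarrow> rinv (V x) \<in> V x"
  unfolding rinv_def using V_ne by (metis someI)

lemma cR_eq: "z \<in> S \<Longrightarrow> w \<in> S \<Longrightarrow> (\<forall>u\<in>S. z \<cdot> u = w \<cdot> u) \<Longrightarrow> cR z = cR w"
  unfolding cR_def by auto
lemma cL_eq: "z \<in> S \<Longrightarrow> w \<in> S \<Longrightarrow> (\<forall>u\<in>S. u \<cdot> z = u \<cdot> w) \<Longrightarrow> cL z = cL w"
  unfolding cL_def by auto
lemma cR_D: "cR z = cR w \<Longrightarrow> z \<in> S \<Longrightarrow> u \<in> S \<Longrightarrow> z \<cdot> u = w \<cdot> u"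
proof -
  assume h: "cR z = cR w" and z: "z \<in> S" and u: "u \<in> S"
  have "z \<in> cR z" using z unfolding cR_def by simp
  then have "z \<in> cR w" using h by simp
  then show ?thesis using u unfolding cR_def by simp
qed
lemma cL_D: "cL z = cL w \<Longrightarrow> z \<in> S \<Longrightarrow> u \<in> S \<Longrightarrow> u \<cdot> z = u \<cdot> w"
proof -
  assume h: "cL z = cL w" and z: "z \<in> S" and u: "u \<in> S"
  have "z \<in> cL z" using z unfolding cL_def by simp
  then have "z \<in> cL w" using h by simp
  then show ?thesis using u unfolding cL_def by simp
qed

lemma rep_cR: "z \<in> S \<Longrightarrow> rep (cR z) \<in> S \<and> (\<forall>u\<in>S. rep (cR z) \<cdot> u = z \<cdot> u)"
proof -
  assume z: "z \<in> S"
  have "z \<in> cR z" using z unfolding cR_def by simp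
  then have "rep (cR z) \<in> cR z" unfolding rep_def by (rule someI)
  then show ?thesis unfolding cR_def by simp
qed

lemma rep_cL: "z \<in> S \<Longrightarrow> rep (cL z) \<in> S \<and> (\<forall>u\<in>S. u \<cdot> rep (cL z) = u \<cdot> z)"
proof -
  assume z: "z \<in> S"
  have "z \<in> cL z" using z unfolding cL_def by simp
  then have "rep (cL z) \<in> cL z" unfolding rep_def by (rule someI)
  then show ?thesis unfolding cL_def by simp
qed

lemma alpha_cR:
  assumes z: "z \<in> S" and x: "x \<in> S" and s: "s \<in> V x"
  shows "alpha (V x) (cR z) = cR (z \<cdot> s)"
  unfolding alpha_def
proof (rule cR_eq)
  have r: "rinv (V x) \<in> V x" using rinv x by blast
  have rS: "rinv (V x) \<in> S" using r VS by blast
  have sS: "s \<in> S" using s VS by blast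
  show "rep (cR z) \<cdot> rinv (V x) \<in> S" using rep_cR z rS by simp
  show "z \<cdot> s \<in> S" using z sS by simp
  show "\<forall>u\<in>S. rep (cR z) \<cdot> rinv (V x) \<cdot> u = z \<cdot> s \<cdot> u"
  proof
    fix u assume u: "u \<in> S"
    have "rep (cR z) \<cdot> rinv (V x) \<cdot> u = rep (cR z) \<cdot> (rinv (V x) \<cdot> u)" using rep_cR z rS u by (simp add: as)
    also have "\<dots> = z \<cdot> (rinv (V x) \<cdot> u)" using rep_cR z rS u by simp
    also have "\<dots> = z \<cdot> rinv (V x) \<cdot> u" using z rS u by (simp add: as)
    also have "\<dots> = z \<cdot> s \<cdot> u" using W2 x r s z u by blast
    finally show "rep (cR z) \<cdot> rinv (V x) \<cdot> u = z \<cdot> s \<cdot> u" .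
  qed
qed

lemma beta_cL:
  assumes y: "y \<in> S" and x: "x \<in> S"
  shows "beta (V x) (cL y) = cL (x \<cdot> y)"
  unfolding beta_def
proof (rule cL_eq)
  obtain t where t: "t = rp (V x)" by blast
  have tS: "t \<in> S" and Vt: "V t = V x" using rp x t by auto
  obtain c where c: "c \<in> V x" using V_ne x by blast
  have cS: "c \<in> S" using c VS by blast
  have tc: "t \<in> V c" using Vsym[OF tS] c Vt by simp
  have xc: "x \<in> V c" using Vsym[OF x] c by simp
  show "rp (V x) \<cdot> rep (cL y) \<in> S" using rep_cL y tS t by simp
  show "x \<cdot> y \<in> S" using x y by simp
  show "\<forall>u\<in>S. u \<cdot> (rp (V x) \<cdot> rep (cL y)) = u \<cdot> (x \<cdot> y)"
  proof
    fix u assume u: "u \<in> S"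
    have "u \<cdot> (t \<cdot> rep (cL y)) = u \<cdot> t \<cdot> rep (cL y)" using rep_cL y tS u by (simp add: as)
    also have "\<dots> = u \<cdot> t \<cdot> y" using rep_cL y tS u by simp
    also have "\<dots> = u \<cdot> x \<cdot> y" using W2[OF cS tc xc u y] .
    also have "\<dots> = u \<cdot> (x \<cdot> y)" using u x y by (simp add: as)
    finally show "u \<cdot> (rp (V x) \<cdot> rep (cL y)) = u \<cdot> (x \<cdot> y)" using t by simp
  qed
qed


lemma KK_rect: "rectangular_band KK kmK"
  unfolding rectangular_band_def sgrp_def KK_def kmK_def by auto

lemma alpha_in: "P \<in> TT \<Longrightarrow> z \<in> S \<Longrightarrow> alpha P (cR z) \<in> cR ` S"
proof -
  assume P: "P \<in> TT" and z: "z \<in> S"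
  then obtain x where x: "x \<in> S" "P = V x" unfolding TT_def by blast
  have "rinv (V x) \<in> S" using rinv x VS by blast
  then show ?thesis unfolding alpha_def using x rep_cR z by simp
qed

lemma beta_in: "P \<in> TT \<Longrightarrow> z \<in> S \<Longrightarrow> beta P (cL z) \<in> cL ` S"
proof -
  assume P: "P \<in> TT" and z: "z \<in> S"
  then obtain x where x: "x \<in> S" "P = V x" unfolding TT_def by blast
  show ?thesis using beta_cL x z by simp
qed

lemma KK_act: "sgrp_action KK kmK TT tmT actK"
  unfolding sgrp_action_def
proof (intro conjI ballI)
  fix t a assume t: "t \<in> TT" and a: "a \<in> KK"
  then obtain z y where "a = (cR z, cL y)" "z \<in> S" "y \<in> S" unfolding KK_def by blast
  then show "actK t a \<in> KK" unfolding actK_def KK_def using alpha_in beta_in t by simp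
next
  fix t a b assume "t \<in> TT" "a \<in> KK" "b \<in> KK"
  show "actK t (kmK a b) = kmK (actK t a) (actK t b)" unfolding actK_def kmK_def by simp
next
  fix P Q a assume P: "P \<in> TT" and Q: "Q \<in> TT" and a: "a \<in> KK"
  then obtain z y where a': "a = (cR z, cL y)" and z: "z \<in> S" and y: "y \<in> S" unfolding KK_def by blast
  obtain p where p: "p \<in> S" "P = V p" using P unfolding TT_def by blast
  obtain q where q: "q \<in> S" "Q = V q" using Q unfolding TT_def by blast
  obtain p' where p': "p' \<in> V p" using V_ne p by blast
  obtain q' where q': "q' \<in> V q" using V_ne q by blast
  have p'S: "p' \<in> S" and q'S: "q' \<in> S" using p' q' VS by auto
  have pq: "tmT P Q = V (p \<cdot> q)" using p q tmT by simp
  have "alpha (tmT P Q) (cR z) = cR (z \<cdot> (q' \<cdot> p'))"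
    using pq alpha_cR[OF z _ prodinv[OF _ _ p' q']] p q by simp
  moreover have "alpha P (alpha Q (cR z)) = cR (z \<cdot> q' \<cdot> p')"
    using alpha_cR[OF z q(1) q'] alpha_cR[OF _ p(1) p'] z q'S p q by simp
  moreover have "beta (tmT P Q) (cL y) = cL (p \<cdot> q \<cdot> y)" using pq beta_cL y p q by simp
  moreover have "beta P (beta Q (cL y)) = cL (p \<cdot> (q \<cdot> y))" using beta_cL y p q by simp
  ultimately show "actK (tmT P Q) a = actK P (actK Q a)"
    unfolding actK_def a' using z y p q p'S q'S by (simp add: as)
qed

lemma phi_carrier: "x \<in> S \<Longrightarrow> phi x \<in> lsd_carrier KK TT tmT actK"
proof -
  assume x: "x \<in> S"
  define r where "r = rinv (V x)"
  have r: "r \<in> V x" unfolding r_def using rinv x by blast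
  have rS: "r \<in> S" using r VS by blast
  have xr: "x \<cdot> r \<cdot> x = x" "r \<cdot> x \<cdot> r = r" using r VD by auto
  have e: "x \<cdot> r \<cdot> (x \<cdot> r) = x \<cdot> r" using xr x rS by (simp add: as)
  have sv: "sinv TT tmT (V x) = V r" using sinvT x r by blast
  have tv: "tmT (V x) (V r) = V (x \<cdot> r)" using tmT x rS by blast
  have "alpha (V (x \<cdot> r)) (cR (x \<cdot> r)) = cR (x \<cdot> r \<cdot> (x \<cdot> r))"
    using alpha_cR[of "x \<cdot> r" "x \<cdot> r" "x \<cdot> r"] idemV[of "x \<cdot> r"] e x rS by simp
  moreover have "beta (V (x \<cdot> r)) (cL x) = cL (x \<cdot> r \<cdot> x)" using beta_cL x rS by simp
  ultimately have "actK (tmT (V x) (sinv TT tmT (V x))) (cR (x \<cdot> r), cL x) = (cR (x \<cdot> r), cL x)"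
    unfolding actK_def using sv tv e xr by simp
  then show ?thesis unfolding phi_def lsd_carrier_def KK_def TT_def using x rS r_def by auto
qed

lemma phi_hom: "x \<in> S \<Longrightarrow> y \<in> S \<Longrightarrow> phi (x \<cdot> y) = lsd_mult kmK TT tmT actK (phi x) (phi y)"
proof -
  assume x: "x \<in> S" and y: "y \<in> S"
  define r where "r = rinv (V x)"
  have r: "r \<in> V x" unfolding r_def using rinv x by blast
  have rS: "r \<in> S" using r VS by blast
  have xr: "x \<cdot> (r \<cdot> x) = x" using r x VV by blast
  define w where "w = rinv (V (x \<cdot> y))"
  have w: "w \<in> V (x \<cdot> y)" unfolding w_def using rinv x y by simp
  have wS: "w \<in> S" using w VS by blast
  have e0: "x \<cdot> y \<cdot> w \<cdot> (x \<cdot> y) = x \<cdot> y" using w VD by blast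
  have "x \<cdot> y \<cdot> w \<cdot> (x \<cdot> y \<cdot> w) = x \<cdot> y \<cdot> w \<cdot> (x \<cdot> y) \<cdot> w" using x y wS by (simp add: as)
  with e0 have e: "x \<cdot> y \<cdot> w \<cdot> (x \<cdot> y \<cdot> w) = x \<cdot> y \<cdot> w" by simp
  have t1: "tmT (V x) (V y) = V (x \<cdot> y)" using tmT x y by blast
  have sv: "sinv TT tmT (V (x \<cdot> y)) = V w" using sinvT x y w by simp
  have tv: "tmT (V (x \<cdot> y)) (V w) = V (x \<cdot> y \<cdot> w)" using tmT x y wS by simp
  have "alpha (V (x \<cdot> y \<cdot> w)) (cR (x \<cdot> r)) = cR (x \<cdot> r \<cdot> (x \<cdot> y \<cdot> w))"
    using alpha_cR[of "x \<cdot> r" "x \<cdot> y \<cdot> w" "x \<cdot> y \<cdot> w"] idemV[of "x \<cdot> y \<cdot> w"] e x y rS wS by simp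
  also have "x \<cdot> r \<cdot> (x \<cdot> y \<cdot> w) = x \<cdot> y \<cdot> w" using x y rS wS xr by (simp add: as ctx)
  finally have a1: "alpha (V (x \<cdot> y \<cdot> w)) (cR (x \<cdot> r)) = cR (x \<cdot> y \<cdot> w)" .
  have b1: "beta (V x) (cL y) = cL (x \<cdot> y)" using beta_cL x y by simp
  show ?thesis
    unfolding phi_def lsd_mult_def actK_def kmK_def
    using t1 sv tv a1 b1 by (simp add: r_def w_def)
qed

lemma phi_inj: "inj_on phi S"
proof
  fix x y assume x: "x \<in> S" and y: "y \<in> S" and h: "phi x = phi y"
  define r where "r = rinv (V x)"
  define r2 where "r2 = rinv (V y)"
  have r: "r \<in> V x" unfolding r_def using rinv x by blast
  have r2: "r2 \<in> V y" unfolding r2_def using rinv y by blast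
  have rS: "r \<in> S" "r2 \<in> S" using r r2 VS by auto
  have hR: "cR (x \<cdot> r) = cR (y \<cdot> r2)" and hL: "cL x = cL y" using h unfolding phi_def r_def r2_def by auto
  have "x = x \<cdot> r \<cdot> x" using r VD by auto
  also have "\<dots> = x \<cdot> r \<cdot> y" using cL_D[OF hL x, of "x \<cdot> r"] x rS by simp
  also have "\<dots> = y \<cdot> r2 \<cdot> y" using cR_D[OF hR _ y] x rS by simp
  also have "\<dots> = y" using r2 VD by auto
  finally show "x = y" .
qed

lemma embeds: "embeds_in_lsd S m KK kmK TT tmT actK"
  unfolding embeds_in_lsd_def
  using KK_rect TT_inv KK_act phi_inj phi_carrier phi_hom by blast

end

lemma lsd_pair: "lsd_mult km T tm act (a, t) (b, u) =
   (km (act (tm (tm t u) (sinv T tm (tm t u))) a) (act t b), tm t u)"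
  by (simp add: lsd_mult_def)

lemma backdir:
  assumes reg: "regular_sgrp S m" and E: "embeds_in_lsd S m K km T tm act"
  shows "generalized_inverse S m"
proof -
  have rb: "rectangular_band K km" and iT: "inverse_sgrp T tm" and ac: "sgrp_action K km T tm act"
    using E unfolding embeds_in_lsd_def by auto
  have "\<exists>phi. inj_on phi S \<and> phi ` S \<subseteq> lsd_carrier K T tm act \<and>
          (\<forall>x\<in>S. \<forall>y\<in>S. phi (m x y) = lsd_mult km T tm act (phi x) (phi y))"
    using E unfolding embeds_in_lsd_def by (elim conjE)
  then obtain phi where inj: "inj_on phi S" and car: "phi ` S \<subseteq> lsd_carrier K T tm act"
    and hom0: "\<forall>x\<in>S. \<forall>y\<in>S. phi (m x y) = lsd_mult km T tm act (phi x) (phi y)"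
    by (elim exE conjE)
  have hom: "\<And>x y. x \<in> S \<Longrightarrow> y \<in> S \<Longrightarrow> phi (m x y) = lsd_mult km T tm act (phi x) (phi y)"
    using hom0 by blast
  interpret invs T tm
    using iT unfolding invs_def invs_axioms_def sgl_def inverse_sgrp_def by blast
  have sS: "\<And>x y. x \<in> S \<Longrightarrow> y \<in> S \<Longrightarrow> m x y \<in> S" using reg unfolding regular_sgrp_def sgrp_def by blast
  have kcl: "\<And>a b. a \<in> K \<Longrightarrow> b \<in> K \<Longrightarrow> km a b \<in> K" using rb unfolding rectangular_band_def sgrp_def by blast
  have kid: "\<And>a. a \<in> K \<Longrightarrow> km a a = a" using rb unfolding rectangular_band_def by blast
  have krect: "\<And>a b c. a \<in> K \<Longrightarrow> b \<in> K \<Longrightarrow> c \<in> K \<Longrightarrow> km (km a b) c = km a c"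
    using rb unfolding rectangular_band_def by blast
  have acl: "\<And>t a. t \<in> T \<Longrightarrow> a \<in> K \<Longrightarrow> act t a \<in> K" using ac unfolding sgrp_action_def by blast
  have ahom: "\<And>t a b. t \<in> T \<Longrightarrow> a \<in> K \<Longrightarrow> b \<in> K \<Longrightarrow> act t (km a b) = km (act t a) (act t b)"
    using ac unfolding sgrp_action_def by blast
  have alaw: "\<And>t u a. t \<in> T \<Longrightarrow> u \<in> T \<Longrightarrow> a \<in> K \<Longrightarrow> act t (act u a) = act (tm t u) a"
    using ac unfolding sgrp_action_def by auto
  define IC where "IC p \<longleftrightarrow> fst p \<in> K \<and> snd p \<in> T \<and> tm (snd p) (snd p) = snd p \<and> act (snd p) (fst p) = fst p" for p
  have img: "IC (phi e)" if e: "e \<in> S" "m e e = e" for e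
  proof -
    obtain a t where at: "phi e = (a, t)" by fastforce
    have c: "a \<in> K" "t \<in> T" "act (tm t (sinv T tm t)) a = a" using car e at unfolding lsd_carrier_def by auto
    have "phi e = lsd_mult km T tm act (phi e) (phi e)" using hom[OF e(1) e(1)] e by simp
    then have tt: "tm t t = t" using at lsd_pair[of km T tm act a t a t] by simp
    then have "act t a = a" using c sinv_idem by simp
    then show ?thesis unfolding IC_def using at c tt by simp
  qed
  have mulIC: "IC (lsd_mult km T tm act (a, t) (b, u)) \<and>
       lsd_mult km T tm act (a, t) (b, u) = (km (act (tm t u) a) (act t b), tm t u)"
    if "IC (a, t)" "IC (b, u)" for a t b u
  proof -
    have a: "a \<in> K" "t \<in> T" "tm t t = t" "act t a = a" and b: "b \<in> K" "u \<in> T" "tm u u = u" "act u b = b"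
      using that unfolding IC_def by auto
    have v: "tm t u \<in> T" "tm (tm t u) (tm t u) = tm t u" using a b idem_prod by auto
    have eq: "lsd_mult km T tm act (a, t) (b, u) = (km (act (tm t u) a) (act t b), tm t u)"
      using lsd_pair[of km T tm act a t b u] sinv_idem v by simp
    have vt: "tm (tm t u) t = tm t u" using ie1 a b by blast
    have tb: "act (tm t u) b = act t b" using alaw[of t u b] a b by simp
    have "act (tm t u) (km (act (tm t u) a) (act t b)) = km (act (tm t u) (act (tm t u) a)) (act (tm t u) (act t b))"
      using ahom acl a b v by simp
    also have "\<dots> = km (act (tm t u) a) (act t b)" using alaw acl a b v vt tb by simp
    finally show ?thesis using eq v kcl acl a b unfolding IC_def by simp
  qed
  have orth: "m (m e f) (m e f) = m e f" if e: "e \<in> S" "m e e = e" and f: "f \<in> S" "m f f = f" for e f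
  proof -
    obtain a t where at: "phi e = (a, t)" by fastforce
    obtain b u where bu: "phi f = (b, u)" by fastforce
    have ic1: "IC (a, t)" "IC (b, u)" using img[OF e] img[OF f] at bu by simp_all
    obtain c v where cv: "phi (m e f) = (c, v)" by fastforce
    have pe: "phi (m e f) = lsd_mult km T tm act (a, t) (b, u)" using hom[OF e(1) f(1)] at bu by simp
    have "IC (lsd_mult km T tm act (a, t) (b, u))" using mulIC[OF ic1] by blast
    then have ic2: "IC (c, v)" using pe cv by simp
    have "phi (m (m e f) (m e f)) = lsd_mult km T tm act (c, v) (c, v)" using hom sS e f cv by simp
    also have "\<dots> = (c, v)" using mulIC[OF ic2 ic2] ic2 kid unfolding IC_def by simp
    finally have "phi (m (m e f) (m e f)) = phi (m e f)" using cv by simp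
    then show ?thesis using inj sS e f unfolding inj_on_def by blast
  qed
  have trip: "lsd_mult km T tm act (lsd_mult km T tm act (lsd_mult km T tm act (a, t) (b, u)) (c, w)) (a, t)
      = (act (tm (tm t u) w) a, tm (tm t u) w)"
    if ic: "IC (a, t)" "IC (b, u)" "IC (c, w)" for a t b u c w
  proof -
    have a: "a \<in> K" "t \<in> T" "tm t t = t" "act t a = a" and b: "b \<in> K" "u \<in> T" "tm u u = u" "act u b = b"
      and c: "c \<in> K" "w \<in> T" "tm w w = w" "act w c = c"
      using ic unfolding IC_def by auto
    define x where "x = tm t u"
    define v where "v = tm x w"
    have x: "x \<in> T" "tm x x = x" unfolding x_def using a b idem_prod by auto
    have vv: "v \<in> T" "tm v v = v" unfolding v_def using x c idem_prod by auto
    have vx: "tm v x = v" unfolding v_def using ie1 x c by blast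
    have vt: "tm v t = v"
    proof -
      have "tm v t = tm x (tm w t)" unfolding v_def using x c a by (simp add: tas)
      also have "\<dots> = tm x (tm t w)" using idem_comm a c by simp
      also have "\<dots> = tm (tm x t) w" using x c a by (simp add: tas)
      also have "\<dots> = v" unfolding v_def using ie1 a b x_def by simp
      finally show ?thesis .
    qed
    have m1: "lsd_mult km T tm act (a, t) (b, u) = (km (act x a) (act t b), x)" and ic1: "IC (km (act x a) (act t b), x)"
      using mulIC[OF ic(1,2)] unfolding x_def by auto
    have m2: "lsd_mult km T tm act (km (act x a) (act t b), x) (c, w) = (km (act v (km (act x a) (act t b))) (act x c), v)"
      and ic2: "IC (km (act v (km (act x a) (act t b))) (act x c), v)"
      using mulIC[OF ic1 ic(3)] unfolding v_def by auto
    have s2: "km (act v (km (act x a) (act t b))) (act x c) = km (act v a) (act x c)"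
      using ahom alaw acl kcl krect a b c x vv vx vt by simp
    have m3: "lsd_mult km T tm act (km (act v a) (act x c), v) (a, t) = (km (act v (km (act v a) (act x c))) (act v a), v)"
      using mulIC[of "km (act v a) (act x c)" v a t] ic2 ic(1) s2 vt by simp
    have s3: "km (act v (km (act v a) (act x c))) (act v a) = act v a"
      using ahom alaw acl kcl krect kid a b c x vv vx vt by simp
    show ?thesis using m1 m2 s2 m3 s3 unfolding v_def x_def by simp
  qed
  have norm: "m (m (m e f) g) e = m (m (m e g) f) e"
    if e: "e \<in> S" "m e e = e" and f: "f \<in> S" "m f f = f" and g: "g \<in> S" "m g g = g" for e f g
  proof -
    obtain a t where at: "phi e = (a, t)" by fastforce
    obtain b u where bu: "phi f = (b, u)" by fastforce
    obtain c w where cw: "phi g = (c, w)" by fastforce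
    have ic: "IC (a, t)" "IC (b, u)" "IC (c, w)" using img[OF e] img[OF f] img[OF g] at bu cw by simp_all
    have t: "t \<in> T" "u \<in> T" "w \<in> T" "tm u u = u" "tm w w = w" using ic unfolding IC_def by auto
    have "phi (m (m (m e f) g) e) = (act (tm (tm t u) w) a, tm (tm t u) w)"
      using hom sS e f g at bu cw trip[OF ic] by simp
    moreover have "phi (m (m (m e g) f) e) = (act (tm (tm t w) u) a, tm (tm t w) u)"
      using hom sS e f g at bu cw trip[OF ic(1) ic(3) ic(2)] by simp
    moreover have "tm (tm t u) w = tm (tm t w) u" using t idem_comm[of u w] by (simp add: tas)
    ultimately have "phi (m (m (m e f) g) e) = phi (m (m (m e g) f) e)" by simp
    then show ?thesis using inj sS e f g unfolding inj_on_def by blast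
  qed
  show ?thesis
    unfolding generalized_inverse_def orthodox_def idems_def
    using reg orth norm sS by auto
qed


lemma ball_img: "(\<forall>x\<in>f ` A. P x) = (\<forall>x\<in>A. P (f x))" by blast

lemma transport:
  assumes E: "embeds_in_lsd S m K km T tm act" and f: "inj_on f K" and g: "inj_on g T"
  shows "embeds_in_lsd S m (f ` K) (\<lambda>x y. f (km (inv_into K f x) (inv_into K f y)))
           (g ` T) (\<lambda>s t. g (tm (inv_into T g s) (inv_into T g t)))
           (\<lambda>t a. f (act (inv_into T g t) (inv_into K f a)))"
    (is "embeds_in_lsd S m ?K ?km ?T ?tm ?act")
proof -
  have rb: "rectangular_band K km" and iT: "inverse_sgrp T tm" and ac: "sgrp_action K km T tm act"
    using E unfolding embeds_in_lsd_def by auto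
  have "\<exists>phi. inj_on phi S \<and> phi ` S \<subseteq> lsd_carrier K T tm act \<and>
          (\<forall>x\<in>S. \<forall>y\<in>S. phi (m x y) = lsd_mult km T tm act (phi x) (phi y))"
    using E unfolding embeds_in_lsd_def by (elim conjE)
  then obtain phi where inj: "inj_on phi S" and car: "phi ` S \<subseteq> lsd_carrier K T tm act"
    and hom: "\<forall>x\<in>S. \<forall>y\<in>S. phi (m x y) = lsd_mult km T tm act (phi x) (phi y)"
    by (elim exE conjE)
  have fi: "\<And>k. k \<in> K \<Longrightarrow> inv_into K f (f k) = k" using f by (simp add: inv_into_f_f)
  have gi: "\<And>k. k \<in> T \<Longrightarrow> inv_into T g (g k) = k" using g by (simp add: inv_into_f_f)
  have kcl: "\<And>a b. a \<in> K \<Longrightarrow> b \<in> K \<Longrightarrow> km a b \<in> K" using rb unfolding rectangular_band_def sgrp_def by blast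
  have tcl: "\<And>a b. a \<in> T \<Longrightarrow> b \<in> T \<Longrightarrow> tm a b \<in> T" using iT unfolding inverse_sgrp_def sgrp_def by blast
  have tas: "\<And>a b c. a \<in> T \<Longrightarrow> b \<in> T \<Longrightarrow> c \<in> T \<Longrightarrow> tm (tm a b) c = tm a (tm b c)"
    using iT unfolding inverse_sgrp_def sgrp_def by blast
  have acl: "\<And>t a. t \<in> T \<Longrightarrow> a \<in> K \<Longrightarrow> act t a \<in> K" using ac unfolding sgrp_action_def by blast
  have kid: "\<And>a. a \<in> K \<Longrightarrow> km a a = a" using rb unfolding rectangular_band_def by blast
  have krect: "\<And>a b c. a \<in> K \<Longrightarrow> b \<in> K \<Longrightarrow> c \<in> K \<Longrightarrow> km (km a b) c = km a c"
    using rb unfolding rectangular_band_def by blast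
  have kas: "\<And>a b c. a \<in> K \<Longrightarrow> b \<in> K \<Longrightarrow> c \<in> K \<Longrightarrow> km (km a b) c = km a (km b c)"
    using rb unfolding rectangular_band_def sgrp_def by blast
  have krect2: "\<And>a b c. a \<in> K \<Longrightarrow> b \<in> K \<Longrightarrow> c \<in> K \<Longrightarrow> km a (km b c) = km a c"
    using krect kas by metis
  have rb': "rectangular_band ?K ?km"
    unfolding rectangular_band_def sgrp_def ball_img by (simp add: fi kcl kid krect krect2)
  have sg': "sgrp ?T ?tm" unfolding sgrp_def ball_img by (simp add: gi tcl tas)
  have iT': "inverse_sgrp ?T ?tm"
    unfolding inverse_sgrp_def
  proof (intro conjI ballI)
    show "sgrp ?T ?tm" by (rule sg')
    fix P assume "P \<in> ?T"
    then obtain a where a: "a \<in> T" "P = g a" by blast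
    let ?x = "sinv T tm a"
    have x: "?x \<in> T" "tm (tm a ?x) a = a" "tm (tm ?x a) ?x = ?x" using sinv_prop[OF iT a(1)] by auto
    show "\<exists>!Q. Q \<in> ?T \<and> ?tm (?tm P Q) P = P \<and> ?tm (?tm Q P) Q = Q"
    proof (rule ex1I[of _ "g ?x"])
      show "g ?x \<in> ?T \<and> ?tm (?tm P (g ?x)) P = P \<and> ?tm (?tm (g ?x) P) (g ?x) = g ?x"
        using a x by (simp add: gi tcl)
      fix Q assume Q: "Q \<in> ?T \<and> ?tm (?tm P Q) P = P \<and> ?tm (?tm Q P) Q = Q"
      then obtain y where y: "y \<in> T" "Q = g y" by blast
      have "g (tm (tm a y) a) = g a" "g (tm (tm y a) y) = g y" using Q y a by (simp_all add: gi tcl)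
      then have "tm (tm a y) a = a" "tm (tm y a) y = y"
        using g a y tcl unfolding inj_on_def by blast+
      then have "y = ?x" using sinv_eq[OF iT a(1)] y by simp
      then show "Q = g ?x" using y by simp
    qed
  qed
  have si: "\<And>t. t \<in> T \<Longrightarrow> sinv ?T ?tm (g t) = g (sinv T tm t)"
  proof -
    fix t assume t: "t \<in> T"
    have x: "sinv T tm t \<in> T" "tm (tm t (sinv T tm t)) t = t" "tm (tm (sinv T tm t) t) (sinv T tm t) = sinv T tm t"
      using sinv_prop[OF iT t] by auto
    show "sinv ?T ?tm (g t) = g (sinv T tm t)"
      by (rule sinv_eq[OF iT']) (use t x in \<open>simp_all add: gi tcl\<close>)
  qed
  have ac': "sgrp_action ?K ?km ?T ?tm ?act"
    using ac unfolding sgrp_action_def ball_img by (simp add: fi gi kcl tcl acl)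
  define psi where "psi x = (f (fst (phi x)), g (snd (phi x)))" for x
  have cx: "\<And>x. x \<in> S \<Longrightarrow> fst (phi x) \<in> K \<and> snd (phi x) \<in> T \<and>
      act (tm (snd (phi x)) (sinv T tm (snd (phi x)))) (fst (phi x)) = fst (phi x)"
    using car unfolding lsd_carrier_def by auto
  have inj': "inj_on psi S"
  proof
    fix x y assume x: "x \<in> S" and y: "y \<in> S" and h: "psi x = psi y"
    have "fst (phi x) = fst (phi y)" using h f cx[OF x] cx[OF y] unfolding psi_def inj_on_def by auto
    moreover have "snd (phi x) = snd (phi y)" using h g cx[OF x] cx[OF y] unfolding psi_def inj_on_def by auto
    ultimately have "phi x = phi y" by (simp add: prod_eq_iff)
    then show "x = y" using inj x y unfolding inj_on_def by blast
  qed
  have car': "psi ` S \<subseteq> lsd_carrier ?K ?T ?tm ?act"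
  proof
    fix p assume "p \<in> psi ` S"
    then obtain x where x: "x \<in> S" "p = psi x" by blast
    have sv: "sinv T tm (snd (phi x)) \<in> T" using sinv_prop[OF iT] cx[OF x(1)] by blast
    show "p \<in> lsd_carrier ?K ?T ?tm ?act"
      unfolding lsd_carrier_def psi_def x(2) using cx[OF x(1)] sv by (simp add: si fi gi tcl)
  qed
  have hom': "\<forall>x\<in>S. \<forall>y\<in>S. psi (m x y) = lsd_mult ?km ?T ?tm ?act (psi x) (psi y)"
  proof (intro ballI)
    fix x y assume x: "x \<in> S" and y: "y \<in> S"
    obtain a t where at: "phi x = (a, t)" by fastforce
    obtain b u where bu: "phi y = (b, u)" by fastforce
    have a: "a \<in> K" "t \<in> T" using cx[OF x] at by auto
    have b: "b \<in> K" "u \<in> T" using cx[OF y] at bu by auto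
    have tu: "tm t u \<in> T" using tcl a b by blast
    have sv: "sinv T tm (tm t u) \<in> T" using sinv_prop[OF iT tu] by blast
    have "psi (m x y) = (f (km (act (tm (tm t u) (sinv T tm (tm t u))) a) (act t b)), g (tm t u))"
      unfolding psi_def using hom x y at bu by (simp add: lsd_mult_def)
    also have "\<dots> = lsd_mult ?km ?T ?tm ?act (psi x) (psi y)"
      unfolding psi_def lsd_mult_def using at bu a b tu sv by (simp add: si fi gi tcl acl kcl)
    finally show "psi (m x y) = lsd_mult ?km ?T ?tm ?act (psi x) (psi y)" .
  qed
  show ?thesis unfolding embeds_in_lsd_def using rb' iT' ac' inj' car' hom' by blast
qed

definition encR :: "'a \<Rightarrow> 'a set" where
  "encR x = (if x = undefined then {} else {undefined, x})"

definition encK :: "'a set \<times> 'a set \<Rightarrow> 'a set set" where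
  "encK p = (\<lambda>x. {x}) ` fst p \<union> encR ` snd p"

lemma encR_ns: "encR y \<noteq> {x}"
  unfolding encR_def by auto

lemma encR_inj: "encR x = encR y \<Longrightarrow> x = y"
  unfolding encR_def by (auto split: if_splits simp: doubleton_eq_iff)

lemma encK_L: "{x} \<in> encK p \<longleftrightarrow> x \<in> fst p"
proof -
  have "{x} \<notin> encR ` snd p" using encR_ns by (metis imageE)
  moreover have "{x} \<in> (\<lambda>x. {x}) ` fst p \<longleftrightarrow> x \<in> fst p" by auto
  ultimately show ?thesis unfolding encK_def by blast
qed

lemma encK_R: "encR x \<in> encK p \<longleftrightarrow> x \<in> snd p"
proof -
  have "encR x \<notin> (\<lambda>x. {x}) ` fst p" using encR_ns by (metis imageE)
  moreover have "encR x \<in> encR ` snd p \<longleftrightarrow> x \<in> snd p" using encR_inj by (metis image_eqI imageE)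
  ultimately show ?thesis unfolding encK_def by blast
qed

lemma kur_inj: "inj_on encK A"
proof
  fix p q assume h: "encK p = encK q"
  have "\<And>x. x \<in> fst p \<longleftrightarrow> x \<in> fst q" using encK_L[of _ p] encK_L[of _ q] h by simp
  moreover have "\<And>x. x \<in> snd p \<longleftrightarrow> x \<in> snd q" using encK_R[of _ p] encK_R[of _ q] h by simp
  ultimately have "fst p = fst q" "snd p = snd q" by blast+
  then show "p = q" by (simp add: prod_eq_iff)
qed

lemma sing_inj: "inj_on (\<lambda>P. (\<lambda>x. {x}) ` P) A"
  unfolding inj_on_def by auto

theorem proposition6p2:
  fixes S :: "'a set" and m :: "'a \<Rightarrow> 'a \<Rightarrow> 'a"
  assumes "regular_sgrp S m"
  shows "(generalized_inverse S m \<longleftrightarrow>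
            (\<exists>(K :: 'a set set set) km (T :: 'a set set set) tm act.
               embeds_in_lsd S m K km T tm act))
       \<and> ((\<exists>(K :: 'k set) km (T :: 't set) tm act. embeds_in_lsd S m K km T tm act)
            \<longrightarrow> generalized_inverse S m)"
proof (intro conjI impI iffI)
  assume gi: "generalized_inverse S m"
  interpret gisg S m by (rule gisg.intro[OF gi])
  show "\<exists>(K :: 'a set set set) km (T :: 'a set set set) tm act. embeds_in_lsd S m K km T tm act"
  proof -
    note tr = transport[OF embeds kur_inj sing_inj]
    show ?thesis by (intro exI) (rule tr)
  qed
next
  assume "\<exists>(K :: 'a set set set) km (T :: 'a set set set) tm act. embeds_in_lsd S m K km T tm act"
  then show "generalized_inverse S m" using backdir assms by blast
next
  assume "\<exists>(K :: 'k set) km (T :: 't set) tm act. embeds_in_lsd S m K km T tm act"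
  then show "generalized_inverse S m" using backdir assms by blast
qed

end
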